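(* Let $n\le d$, let $\{u_i\}_{i=1}^n$ be an orthonormal family in $\mathbb{C}^d$, let $\{e_i\}$ be the standard basis of $\mathbb{C}^n$, and let $K=\sum_{i=1}^n|e_i\rangle\langle u_i\otimes\overline{u_i}|$. If $\rho$ is a separable bipartite PSD matrix on $\mathbb{C}^d\otimes\mathbb{C}^d$ whose range is contained in the symmetric subspace $\mathbb{C}^d\vee\mathbb{C}^d$, then $Z^\Gamma_K(\rho)=K\rho^\Gamma K^*\in\operatorname{R}_1[\mathsf{DNN}_n]$.
   Context: $\rho^\Gamma$ is the partial transpose on the second factor (standard basis), $\overline{u}$ is entrywise complex conjugation. A bipartite PSD $\rho$ is separable if it is a finite sum $\sum_k|v_k\rangle\langle v_k|\otimes|w_k\rangle\langle w_k|$. The symmetric subspace $\mathbb{C}^d\vee\mathbb{C}^d$ is the $+1$ eigenspace of the flip operator $F=\sum_{i,j}|ij\rangle\langle ji|$. $\mathsf{DNN}_n$ is the cone of $n\times n$ PSD matrices with entrywise nonnegative entries, and $\operatorname{R}_1[\mathsf{DNN}_n]$ is the convex cone generated by the rank-1 matrices in $\mathsf{DNN}_n$. *)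

theory Defs
  imports "Jordan_Normal_Form.Schur_Decomposition" "Jordan_Normal_Form.DL_Rank"
begin

text \<open>Conventions: \<open>\<complex>^d \<otimes> \<complex>^d\<close> is \<open>\<complex>^(d*d)\<close> with basis vector
  \<open>|i j>\<close> at index \<open>i*d + j\<close> (lexicographic order).\<close>

definition cnonneg :: "complex \<Rightarrow> bool" where
  "cnonneg z \<longleftrightarrow> z \<in> \<real> \<and> 0 \<le> Re z"

definition psd_mat :: "nat \<Rightarrow> complex mat \<Rightarrow> bool" where
  "psd_mat n A \<longleftrightarrow> A \<in> carrier_mat n n \<and> A = mat_adjoint A \<and>
     (\<forall>v \<in> carrier_vec n. cnonneg (scalar_prod (conjugate v) (A *\<^sub>v v)))"

definition tensor_vec :: "complex vec \<Rightarrow> complex vec \<Rightarrow> complex vec" where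
  "tensor_vec v w = vec (dim_vec v * dim_vec w)
     (\<lambda>k. v $ (k div dim_vec w) * w $ (k mod dim_vec w))"

definition kron_mat :: "complex mat \<Rightarrow> complex mat \<Rightarrow> complex mat" where
  "kron_mat A B = mat (dim_row A * dim_row B) (dim_col A * dim_col B)
     (\<lambda>(r, c). A $$ (r div dim_row B, c div dim_col B) * B $$ (r mod dim_row B, c mod dim_col B))"

definition outer :: "complex vec \<Rightarrow> complex vec \<Rightarrow> complex mat" where
  "outer v w = mat (dim_vec v) (dim_vec w) (\<lambda>(i, j). v $ i * cnj (w $ j))"

definition separable :: "nat \<Rightarrow> complex mat \<Rightarrow> bool" where
  "separable d \<rho> \<longleftrightarrow> (\<exists>vws :: (complex vec \<times> complex vec) list.
     (\<forall>(v, w) \<in> set vws. v \<in> carrier_vec d \<and> w \<in> carrier_vec d) \<and>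
     \<rho> = foldr (+) (map (\<lambda>(v, w). kron_mat (outer v v) (outer w w)) vws) (0\<^sub>m (d*d) (d*d)))"

text \<open>Partial transpose on the second factor:
  \<open>\<rho>^\<Gamma>(ij, kl) = \<rho>(il, kj)\<close>.\<close>
definition ptrans :: "nat \<Rightarrow> complex mat \<Rightarrow> complex mat" where
  "ptrans d \<rho> = mat (d*d) (d*d)
     (\<lambda>(r, c). \<rho> $$ ((r div d) * d + c mod d, (c div d) * d + r mod d))"

definition flip_mat :: "nat \<Rightarrow> complex mat" where
  "flip_mat d = mat (d*d) (d*d) (\<lambda>(r, c). if r = (c mod d) * d + c div d then 1 else 0)"

text \<open>Range of \<rho> contained in the symmetric subspace (+1 eigenspace of F).\<close>
definition range_in_sym :: "nat \<Rightarrow> complex mat \<Rightarrow> bool" where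
  "range_in_sym d \<rho> \<longleftrightarrow> (\<forall>x \<in> carrier_vec (d*d). flip_mat d *\<^sub>v (\<rho> *\<^sub>v x) = \<rho> *\<^sub>v x)"

definition DNN :: "nat \<Rightarrow> complex mat set" where
  "DNN n = {A. psd_mat n A \<and> (\<forall>i < n. \<forall>j < n. cnonneg (A $$ (i, j)))}"

definition R1_DNN :: "nat \<Rightarrow> complex mat set" where
  "R1_DNN n = {A. \<exists>Ms :: (real \<times> complex mat) list.
     (\<forall>(c, M) \<in> set Ms. c \<ge> 0 \<and> M \<in> DNN n \<and> vec_space.rank n M = 1) \<and>
     A = foldr (+) (map (\<lambda>(c, M). complex_of_real c \<cdot>\<^sub>m M) Ms) (0\<^sub>m n n)}"

text \<open>\<open>K = \<Sum>_i |e_i><u_i \<otimes> conj u_i|\<close>, an n x d^2 matrix.\<close>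
definition K_mat :: "nat \<Rightarrow> nat \<Rightarrow> (nat \<Rightarrow> complex vec) \<Rightarrow> complex mat" where
  "K_mat n d u = mat n (d*d) (\<lambda>(i, c). cnj (tensor_vec (u i) (conjugate (u i)) $ c))"

end

theory Submission
  imports Defs
begin

lemma adj_dims[simp]: "dim_row (mat_adjoint A) = dim_col A" "dim_col (mat_adjoint A) = dim_row A"
  unfolding mat_adjoint_def by auto

lemma adj_index[simp]: "i < dim_col A \<Longrightarrow> j < dim_row A \<Longrightarrow> mat_adjoint A $$ (i,j) = cnj (A $$ (j,i))"
  unfolding mat_adjoint_def by (simp add: mat_of_rows_index)

lemma outer_dims[simp]: "dim_row (outer v w) = dim_vec v" "dim_col (outer v w) = dim_vec w"
  unfolding outer_def by auto

lemma outer_index[simp]: "i < dim_vec v \<Longrightarrow> j < dim_vec w \<Longrightarrow> outer v w $$ (i,j) = v $ i * cnj (w $ j)"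
  unfolding outer_def by auto

lemma idx_lt: "(a::nat) < d \<Longrightarrow> b < d \<Longrightarrow> a * d + b < d * d"
proof -
  assume a: "a < d" and b: "b < d"
  have "a * d + b < a * d + d" using b by simp
  also have "\<dots> = (a+1) * d" by simp
  also have "\<dots> \<le> d * d" using a by (intro mult_right_mono) auto
  finally show ?thesis .
qed

lemma div_lt: "(r::nat) < d * d \<Longrightarrow> r div d < d"
  by (simp add: less_mult_imp_div_less)
lemma mod_lt: "(r::nat) < d * d \<Longrightarrow> r mod d < d"
  by (cases "d = 0") auto

lemma sum_split:
  "(\<Sum>r<(d::nat)*d. f (r div d) (r mod d)) = (\<Sum>p<d. \<Sum>q<d. f p q :: 'a::comm_monoid_add)"
proof -
  let ?h = "\<lambda>(p,q). p*d+q"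
  have bij: "bij_betw ?h ({..<d} \<times> {..<d}) {..<d*d}"
  proof (rule bij_betw_byWitness[where f' = "\<lambda>r. (r div d, r mod d)"])
    show "\<forall>a\<in>{..<d} \<times> {..<d}. (\<lambda>r. (r div d, r mod d)) (?h a) = a" by auto
    show "\<forall>a'\<in>{..<d * d}. ?h (a' div d, a' mod d) = a'" by auto
    show "?h ` ({..<d} \<times> {..<d}) \<subseteq> {..<d * d}" using idx_lt by auto
    show "(\<lambda>r. (r div d, r mod d)) ` {..<d * d} \<subseteq> {..<d} \<times> {..<d}" using div_lt mod_lt by auto
  qed
  have "(\<Sum>r<d*d. f (r div d) (r mod d)) = (\<Sum>x\<in>{..<d} \<times> {..<d}. f (?h x div d) (?h x mod d))"
    using sum.reindex_bij_betw[OF bij, of "\<lambda>r. f (r div d) (r mod d)"] by simp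
  also have "\<dots> = (\<Sum>x\<in>{..<d} \<times> {..<d}. f (fst x) (snd x))"
    by (rule sum.cong) auto
  also have "\<dots> = (\<Sum>p<d. \<Sum>q<d. f p q)"
    by (simp add: sum.cartesian_product split_def)
  finally show ?thesis .
qed

lemma foldr_carrier:
  assumes "\<forall>x\<in>set xs. f x \<in> carrier_mat m m'"
  shows "foldr (+) (map f xs) (0\<^sub>m m m') \<in> carrier_mat m m'"
  using assms by (induction xs) auto

lemma foldr_index:
  assumes "\<forall>x\<in>set xs. f x \<in> carrier_mat m m'" and "i < m" "j < m'"
  shows "foldr (+) (map f xs) (0\<^sub>m m m') $$ (i,j) = sum_list (map (\<lambda>x. f x $$ (i,j)) xs)"
  using assms
proof (induction xs)
  case Nil then show ?case by simp
next
  case (Cons a xs)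
  have c: "foldr (+) (map f xs) (0\<^sub>m m m') \<in> carrier_mat m m'" using Cons.prems foldr_carrier by auto
  then show ?case using Cons by auto
qed

lemma ptrans_carrier[simp]: "ptrans d A \<in> carrier_mat (d*d) (d*d)"
  unfolding ptrans_def by auto

lemma ptrans_add:
  assumes "A \<in> carrier_mat (d*d) (d*d)" "B \<in> carrier_mat (d*d) (d*d)"
  shows "ptrans d (A + B) = ptrans d A + ptrans d B"
proof (rule eq_matI)
  fix i j assume ij: "i < dim_row (ptrans d A + ptrans d B)" "j < dim_col (ptrans d A + ptrans d B)"
  then have i: "i < d*d" and j: "j < d*d" by (auto simp: ptrans_def)
  have "(i div d) * d + j mod d < d*d" "(j div d) * d + i mod d < d*d"
    using idx_lt div_lt mod_lt i j by auto
  then show "ptrans d (A + B) $$ (i, j) = (ptrans d A + ptrans d B) $$ (i, j)"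
    using i j assms by (simp add: ptrans_def)
qed (auto simp: ptrans_def)

lemma ptrans_zero: "ptrans d (0\<^sub>m (d*d) (d*d)) = 0\<^sub>m (d*d) (d*d)"
proof (rule eq_matI)
  fix i j assume ij: "i < dim_row (0\<^sub>m (d*d) (d*d) :: complex mat)" "j < dim_col (0\<^sub>m (d*d) (d*d) :: complex mat)"
  then have i: "i < d*d" and j: "j < d*d" by auto
  have "(i div d) * d + j mod d < d*d" "(j div d) * d + i mod d < d*d"
    using idx_lt div_lt mod_lt i j by auto
  then show "ptrans d (0\<^sub>m (d*d) (d*d)) $$ (i, j) = 0\<^sub>m (d*d) (d*d) $$ (i, j)"
    using i j by (simp add: ptrans_def)
qed (auto simp: ptrans_def)

definition tv :: "complex vec \<Rightarrow> complex vec \<Rightarrow> complex vec" where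
  "tv v w = tensor_vec v (conjugate w)"

lemma tv_dim[simp]: "v \<in> carrier_vec d \<Longrightarrow> w \<in> carrier_vec d \<Longrightarrow> dim_vec (tv v w) = d * d"
  unfolding tv_def tensor_vec_def by auto

lemma tv_index: "v \<in> carrier_vec d \<Longrightarrow> w \<in> carrier_vec d \<Longrightarrow> r < d * d \<Longrightarrow>
   tv v w $ r = v $ (r div d) * cnj (w $ (r mod d))"
  unfolding tv_def tensor_vec_def using mod_lt by auto

lemma tensor_index: "v \<in> carrier_vec d \<Longrightarrow> w \<in> carrier_vec d \<Longrightarrow> r < d * d \<Longrightarrow>
   tensor_vec v w $ r = v $ (r div d) * w $ (r mod d)"
  unfolding tensor_vec_def by auto

lemma kron_index: "v \<in> carrier_vec d \<Longrightarrow> w \<in> carrier_vec d \<Longrightarrow> r < d * d \<Longrightarrow> c < d * d \<Longrightarrow>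
   kron_mat (outer v v) (outer w w) $$ (r,c) = tensor_vec v w $ r * cnj (tensor_vec v w $ c)"
  unfolding kron_mat_def using div_lt mod_lt by (auto simp: tensor_index)

lemma kron_carrier: "v \<in> carrier_vec d \<Longrightarrow> w \<in> carrier_vec d \<Longrightarrow>
   kron_mat (outer v v) (outer w w) \<in> carrier_mat (d*d) (d*d)"
  unfolding kron_mat_def by auto

lemma ptrans_kron:
  assumes v: "v \<in> carrier_vec d" and w: "w \<in> carrier_vec d"
  shows "ptrans d (kron_mat (outer v v) (outer w w)) = outer (tv v w) (tv v w)"
proof (rule eq_matI)
  fix i j assume ij: "i < dim_row (outer (tv v w) (tv v w))" "j < dim_col (outer (tv v w) (tv v w))"
  then have i: "i < d*d" and j: "j < d*d" using v w by auto
  have a: "(i div d) * d + j mod d < d*d" "(j div d) * d + i mod d < d*d"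
    using idx_lt div_lt mod_lt i j by auto
  have "d > 0" using i by (cases d) auto
  then show "ptrans d (kron_mat (outer v v) (outer w w)) $$ (i, j) = outer (tv v w) (tv v w) $$ (i, j)"
    using i j a v w by (simp add: ptrans_def kron_index tensor_index tv_index mod_lt)
qed (use v w in \<open>auto simp: ptrans_def\<close>)

lemma outer_sandwich:
  assumes K: "K \<in> carrier_mat n N" and w: "w \<in> carrier_vec N"
  shows "K * outer w w * mat_adjoint K = outer (K *\<^sub>v w) (K *\<^sub>v w)"
proof (rule eq_matI)
  fix i j assume "i < dim_row (outer (K *\<^sub>v w) (K *\<^sub>v w))" "j < dim_col (outer (K *\<^sub>v w) (K *\<^sub>v w))"
  then have i: "i < n" and j: "j < n" using K by auto
  have "(K * outer w w * mat_adjoint K) $$ (i,j) =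
      (\<Sum>c\<in>{0..<N}. (\<Sum>r\<in>{0..<N}. K $$ (i,r) * (w $ r * cnj (w $ c))) * cnj (K $$ (j,c)))"
    using i j K w by (simp add: scalar_prod_def)
  also have "\<dots> = (\<Sum>r\<in>{0..<N}. K $$ (i,r) * w $ r) * cnj (\<Sum>c\<in>{0..<N}. K $$ (j,c) * w $ c)"
    by (simp add: sum_distrib_left sum_distrib_right mult_ac)
  also have "\<dots> = outer (K *\<^sub>v w) (K *\<^sub>v w) $$ (i,j)"
    using i j K w by (simp add: scalar_prod_def)
  finally show "(K * outer w w * mat_adjoint K) $$ (i,j) = outer (K *\<^sub>v w) (K *\<^sub>v w) $$ (i,j)" .
qed (use K in auto)

definition alpha :: "nat \<Rightarrow> (nat \<Rightarrow> complex vec) \<Rightarrow> nat \<Rightarrow> complex vec \<Rightarrow> complex" where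
  "alpha d u i x = (\<Sum>p<d. cnj (u i $ p) * x $ p)"

lemma K_carrier: "K_mat n d u \<in> carrier_mat n (d*d)"
  unfolding K_mat_def by auto

lemma K_tv:
  assumes u: "\<And>i. i < n \<Longrightarrow> u i \<in> carrier_vec d"
    and v: "v \<in> carrier_vec d" and w: "w \<in> carrier_vec d"
  shows "K_mat n d u *\<^sub>v tv v w = vec n (\<lambda>i. alpha d u i v * cnj (alpha d u i w))"
proof (rule eq_vecI)
  fix i assume "i < dim_vec (vec n (\<lambda>i. alpha d u i v * cnj (alpha d u i w)))"
  then have i: "i < n" by simp
  have ui: "u i \<in> carrier_vec d" using u i by auto
  have "(K_mat n d u *\<^sub>v tv v w) $ i = (\<Sum>r<d*d. (cnj (u i $ (r div d)) * v $ (r div d)) * (u i $ (r mod d) * cnj (w $ (r mod d))))"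
    using i v w ui
    by (auto simp: K_mat_def scalar_prod_def tv_index tensor_index atLeast0LessThan mod_lt div_lt intro!: sum.cong)
  also have "\<dots> = (\<Sum>p<d. \<Sum>q<d. (cnj (u i $ p) * v $ p) * (u i $ q * cnj (w $ q)))"
    by (rule sum_split)
  also have "\<dots> = (\<Sum>p<d. cnj (u i $ p) * v $ p) * (\<Sum>q<d. u i $ q * cnj (w $ q))"
    by (simp add: sum_product)
  also have "\<dots> = alpha d u i v * cnj (alpha d u i w)"
    by (simp add: alpha_def)
  finally show "(K_mat n d u *\<^sub>v tv v w) $ i = vec n (\<lambda>i. alpha d u i v * cnj (alpha d u i w)) $ i"
    using i by simp
qed (simp add: K_mat_def)

lemma flip_iff:
  assumes r: "(r::nat) < d*d" and s: "s < d*d"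
  shows "r = (s mod d) * d + s div d \<longleftrightarrow> s = (r mod d) * d + r div d"
proof -
  have dp: "d > 0" using r by (cases d) auto
  have sd: "s div d < d" "s mod d < d" "r div d < d" "r mod d < d" using div_lt mod_lt r s by auto
  show ?thesis
  proof
    assume h: "r = (s mod d) * d + s div d"
    then have "r div d = s mod d" "r mod d = s div d" using sd dp by auto
    then show "s = (r mod d) * d + r div d" by (simp add: mult.commute)
  next
    assume h: "s = (r mod d) * d + r div d"
    then have "s div d = r mod d" "s mod d = r div d" using sd dp by auto
    then show "r = (s mod d) * d + s div d" by (simp add: mult.commute)
  qed
qed

lemma sl_sq: "sum_list (map (\<lambda>x. g x * cnj (g x)) xs) = complex_of_real (sum_list (map (\<lambda>x. (cmod (g x))^2) xs))"
proof (induction xs)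
  case (Cons a xs)
  then show ?case using complex_norm_square[of "g a"] by simp
qed simp

lemma sl_zero:
  assumes "sum_list (map (\<lambda>x. g x * cnj (g x)) xs) = 0" "x \<in> set xs"
  shows "g x = (0::complex)"
proof -
  have "sum_list (map (\<lambda>x. (cmod (g x))^2) xs) = 0" using assms(1) sl_sq[of g xs] by simp
  then have "\<forall>y\<in>set (map (\<lambda>x. (cmod (g x))^2) xs). y = 0"
    by (subst sum_list_nonneg_eq_0_iff[symmetric]) auto
  then show ?thesis using assms(2) by auto
qed

lemma rho_flip:
  assumes rs: "range_in_sym d \<rho>" and rho: "\<rho> \<in> carrier_mat (d*d) (d*d)"
    and r: "r < d*d" and c: "c < d*d"
  shows "\<rho> $$ ((r mod d) * d + r div d, c) = \<rho> $$ (r, c)"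
proof -
  let ?N = "d*d"
  define y where "y = \<rho> *\<^sub>v unit_vec ?N c"
  have y: "y \<in> carrier_vec ?N" using rho unfolding y_def by auto
  have yi: "\<And>s. s < ?N \<Longrightarrow> y $ s = \<rho> $$ (s, c)" using rho c unfolding y_def by auto
  have eq: "flip_mat d *\<^sub>v y = y" using rs unfolding range_in_sym_def y_def by auto
  have fr: "(r mod d) * d + r div d < ?N" using idx_lt div_lt mod_lt r by auto
  have "(flip_mat d *\<^sub>v y) $ r = (\<Sum>s\<in>{0..<?N}. (if r = (s mod d) * d + s div d then 1 else 0) * y $ s)"
    using r y by (simp add: flip_mat_def scalar_prod_def)
  also have "\<dots> = (\<Sum>s\<in>{0..<?N}. if s = (r mod d) * d + r div d then y $ s else 0)"
    by (rule sum.cong) (use flip_iff r in auto)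
  also have "\<dots> = y $ ((r mod d) * d + r div d)"
    using fr by (simp add: sum.delta')
  finally have "y $ ((r mod d) * d + r div d) = y $ r" using eq by simp
  then show ?thesis using yi fr r by simp
qed

lemma sym_terms:
  assumes vws: "\<forall>(v, w) \<in> set vws. v \<in> carrier_vec d \<and> w \<in> carrier_vec d"
    and rho: "\<rho> = foldr (+) (map (\<lambda>(v, w). kron_mat (outer v v) (outer w w)) vws) (0\<^sub>m (d*d) (d*d))"
    and rs: "range_in_sym d \<rho>"
    and mem: "(v, w) \<in> set vws" and p: "p < d" and q: "q < d"
  shows "v $ p * w $ q = v $ q * w $ p"
proof -
  let ?N = "d*d"
  define X where "X = (\<lambda>x r. tensor_vec (fst x) (snd x) $ r)"
  have carr: "\<forall>x\<in>set vws. (\<lambda>(v, w). kron_mat (outer v v) (outer w w)) x \<in> carrier_mat ?N ?N"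
    using vws kron_carrier by auto
  have rc: "\<rho> \<in> carrier_mat ?N ?N" unfolding rho using foldr_carrier[OF carr] .
  have ent: "\<rho> $$ (r,c) = sum_list (map (\<lambda>x. X x r * cnj (X x c)) vws)" if "r < ?N" "c < ?N" for r c
  proof -
    have "\<rho> $$ (r,c) = sum_list (map (\<lambda>x. (\<lambda>(v, w). kron_mat (outer v v) (outer w w)) x $$ (r,c)) vws)"
      unfolding rho by (rule foldr_index[OF carr that])
    also have "\<dots> = sum_list (map (\<lambda>x. X x r * cnj (X x c)) vws)"
      by (rule arg_cong[where f=sum_list], rule map_cong) (use vws that in \<open>auto simp: X_def kron_index\<close>)
    finally show ?thesis .
  qed
  define r where "r = p * d + q"
  define r' where "r' = q * d + p"
  have r: "r < ?N" "r' < ?N" unfolding r_def r'_def using idx_lt p q by auto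
  have fr: "(r mod d) * d + r div d = r'" "(r' mod d) * d + r' div d = r"
    unfolding r_def r'_def using p q by auto
  have s1: "\<rho> $$ (r', c) = \<rho> $$ (r, c)" if "c < ?N" for c
    using rho_flip[OF rs rc r(1) that] fr by simp
  have "sum_list (map (\<lambda>x. (X x r - X x r') * cnj (X x r - X x r')) vws)
     = sum_list (map (\<lambda>x. X x r * cnj (X x r)) vws) - sum_list (map (\<lambda>x. X x r * cnj (X x r')) vws)
       - sum_list (map (\<lambda>x. X x r' * cnj (X x r)) vws) + sum_list (map (\<lambda>x. X x r' * cnj (X x r')) vws)"
    by (simp add: algebra_simps sum_list_addf sum_list_subtractf)
  also have "\<dots> = \<rho> $$ (r,r) - \<rho> $$ (r,r') - \<rho> $$ (r',r) + \<rho> $$ (r',r')"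
    using ent r by simp
  also have "\<dots> = 0" using s1 r by simp
  finally have "sum_list (map (\<lambda>x. (X x r - X x r') * cnj (X x r - X x r')) vws) = 0" .
  then have "X (v,w) r - X (v,w) r' = 0" using sl_zero[where g = "\<lambda>x. X x r - X x r'"] mem by blast
  then have "X (v,w) r = X (v,w) r'" by simp
  moreover have "v \<in> carrier_vec d" "w \<in> carrier_vec d" using vws mem by auto
  ultimately show ?thesis using r p q unfolding X_def r_def r'_def
    by (simp add: tensor_index mult.commute)
qed

lemma rank_one_nonzero:
  fixes A :: "complex mat"
  assumes A: "A \<in> carrier_mat n n" and c: "c < n" and nz: "col A c \<noteq> 0\<^sub>v n"
  shows "vec_space.rank n A \<ge> 1"
proof -
  interpret V: vec_space "TYPE(complex)" n .
  have cc: "col A c \<in> carrier_vec n" using A c by auto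
  have li0: "V.lin_indpt {}"
    unfolding V.lin_dep_def by auto
  have "col A c \<in> V.span {} \<longleftrightarrow> V.lin_dep ({} \<union> {col A c})"
    by (rule V.lin_dep_iff_in_span) (use cc li0 in auto)
  moreover have "col A c \<notin> V.span {}" using nz V.span_empty by auto
  ultimately have li: "V.lin_indpt {col A c}" by simp
  have "card {col A c} \<le> V.rank A"
    by (rule V.rank_ge_card_indpt[OF A _ li]) (use A c in \<open>auto simp: cols_def\<close>)
  then show ?thesis by simp
qed

lemma outer_carrier: "v \<in> carrier_vec n \<Longrightarrow> w \<in> carrier_vec m \<Longrightarrow> outer v w \<in> carrier_mat n m"
  by (rule carrier_matI) (simp_all only: outer_dims carrier_vecD)

lemma adj_carrier: "K \<in> carrier_mat n m \<Longrightarrow> mat_adjoint K \<in> carrier_mat m n"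
  by (rule carrier_matI) (simp_all only: adj_dims carrier_matD)

lemma cnonneg_of_real: "r \<ge> 0 \<Longrightarrow> cnonneg (complex_of_real r)"
  unfolding cnonneg_def by auto

lemma outer_adj: "outer z z = mat_adjoint (outer z z)"
proof (rule eq_matI)
  fix i j assume "i < dim_row (mat_adjoint (outer z z))" "j < dim_col (mat_adjoint (outer z z))"
  then have i: "i < dim_vec z" and j: "j < dim_vec z" by auto
  show "outer z z $$ (i, j) = mat_adjoint (outer z z) $$ (i, j)" using i j by simp
qed auto

lemma outer_form:
  assumes z: "z \<in> carrier_vec n" and v: "v \<in> carrier_vec n"
  shows "cnonneg (conjugate v \<bullet> (outer z z *\<^sub>v v))"
proof -
  define s where "s = (\<Sum>j\<in>{0..<n}. cnj (z $ j) * v $ j)"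
  have "conjugate v \<bullet> (outer z z *\<^sub>v v) = (\<Sum>i\<in>{0..<n}. cnj (v $ i) * (\<Sum>j\<in>{0..<n}. z $ i * cnj (z $ j) * v $ j))"
    using z v by (simp add: scalar_prod_def)
  also have "\<dots> = (\<Sum>i\<in>{0..<n}. (cnj (v $ i) * z $ i) * s)"
    unfolding s_def by (rule sum.cong) (simp_all add: sum_distrib_left mult.assoc)
  also have "\<dots> = cnj s * s" unfolding s_def sum_distrib_right[symmetric] by (simp add: mult.commute)
  also have "\<dots> = complex_of_real ((cmod s)^2)" using complex_norm_square[of s] by (simp add: mult.commute)
  finally have eq: "conjugate v \<bullet> (outer z z *\<^sub>v v) = complex_of_real ((cmod s)^2)" .
  show ?thesis unfolding eq by (rule cnonneg_of_real) simp
qed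

lemma outer_psd:
  assumes z: "z \<in> carrier_vec n"
  shows "psd_mat n (outer z z)"
proof -
  have c1: "outer z z \<in> carrier_mat n n" by (rule outer_carrier[OF z z])
  have c2: "outer z z = mat_adjoint (outer z z)" by (rule outer_adj)
  have c3: "\<forall>v \<in> carrier_vec n. cnonneg (conjugate v \<bullet> (outer z z *\<^sub>v v))" by (intro ballI outer_form[OF z])
  show ?thesis unfolding psd_mat_def by (rule conjI[OF c1 conjI[OF c2 c3]])
qed

definition good :: "nat \<Rightarrow> complex mat \<Rightarrow> bool" where
  "good n T \<longleftrightarrow> T = 0\<^sub>m n n \<or> (\<exists>c Z. c \<ge> 0 \<and> Z \<in> DNN n \<and> vec_space.rank n Z = 1 \<and> T = complex_of_real c \<cdot>\<^sub>m Z)"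

lemma good_real_outer:
  assumes a: "\<And>i. i < n \<Longrightarrow> a i \<ge> 0" and i0: "i0 < n" "a i0 \<noteq> 0"
  defines "z \<equiv> vec n (\<lambda>i. complex_of_real (a i))"
  shows "outer z z \<in> DNN n \<and> vec_space.rank n (outer z z) = 1"
proof -
  have zc: "z \<in> carrier_vec n" unfolding z_def by auto
  have Zc: "outer z z \<in> carrier_mat n n" by (rule outer_carrier[OF zc zc])
  have "outer z z \<in> DNN n"
  proof -
    have "\<forall>i<n. \<forall>j<n. cnonneg (outer z z $$ (i,j))"
    proof (intro allI impI)
      fix i j assume i: "i < n" and j: "j < n"
      have e: "outer z z $$ (i,j) = complex_of_real (a i * a j)" using i j zc unfolding z_def by simp
      show "cnonneg (outer z z $$ (i,j))" unfolding e by (rule cnonneg_of_real) (use a i j in simp)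
    qed
    then show ?thesis using outer_psd[OF zc] unfolding DNN_def by simp
  qed
  moreover have "vec_space.rank n (outer z z) \<le> 1"
    by (rule vec_space.rank_le_1_product_entries[OF Zc, of "\<lambda>r. z $ r" "\<lambda>c. cnj (z $ c)"]) (use zc in auto)
  moreover have "vec_space.rank n (outer z z) \<ge> 1"
  proof (rule rank_one_nonzero[OF Zc i0(1)])
    have "col (outer z z) i0 $ i0 \<noteq> 0" using i0 zc by (simp add: z_def)
    then show "col (outer z z) i0 \<noteq> 0\<^sub>v n" using i0 by auto
  qed
  ultimately show ?thesis by auto
qed

lemma good_outer:
  fixes n :: nat and u :: "nat \<Rightarrow> complex vec"
  assumes v: "v \<in> carrier_vec d" and w: "w \<in> carrier_vec d"
    and sym: "\<And>p q. p < d \<Longrightarrow> q < d \<Longrightarrow> v $ p * w $ q = v $ q * w $ p"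
  defines "y \<equiv> vec n (\<lambda>i. alpha d u i v * cnj (alpha d u i w))"
  shows "good n (outer y y)"
proof (cases "\<forall>p<d. v $ p = 0")
  case True
  then have "\<And>i. alpha d u i v = 0" unfolding alpha_def by auto
  then have "outer y y = 0\<^sub>m n n" unfolding y_def by (intro eq_matI) auto
  then show ?thesis unfolding good_def by auto
next
  case False
  then obtain p0 where p0: "p0 < d" "v $ p0 \<noteq> 0" by auto
  define l where "l = w $ p0 / v $ p0"
  have wq: "w $ q = l * v $ q" if "q < d" for q
  proof -
    have "v $ p0 * w $ q = v $ q * w $ p0" using sym p0 that by auto
    then show ?thesis unfolding l_def using p0 by (simp add: field_simps)
  qed
  have aw: "alpha d u i w = l * alpha d u i v" for i
    unfolding alpha_def sum_distrib_left by (rule sum.cong) (auto simp: wq)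
  define a where "a i = (cmod (alpha d u i v))^2" for i
  define z where "z = vec n (\<lambda>i. complex_of_real (a i))"
  have yz: "y $ i = cnj l * z $ i" if "i < n" for i
  proof -
    have "y $ i = alpha d u i v * cnj (l * alpha d u i v)" by (simp add: y_def aw that)
    also have "\<dots> = cnj l * (alpha d u i v * cnj (alpha d u i v))" by (simp add: mult_ac)
    also have "\<dots> = cnj l * z $ i" using complex_norm_square[of "alpha d u i v"] that
      by (simp add: z_def a_def)
    finally show ?thesis .
  qed
  show ?thesis
  proof (cases "\<forall>i<n. a i = 0")
    case True
    then have "outer y y = 0\<^sub>m n n" using yz unfolding z_def
      by (intro eq_matI) (auto simp: y_def)
    then show ?thesis unfolding good_def by auto
  next
    case False
    then obtain i0 where i0: "i0 < n" "a i0 \<noteq> 0" by auto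
    have "outer z z \<in> DNN n \<and> vec_space.rank n (outer z z) = 1"
      unfolding z_def by (rule good_real_outer) (use i0 in \<open>auto simp: a_def\<close>)
    moreover have "outer y y = complex_of_real ((cmod l)^2) \<cdot>\<^sub>m outer z z"
    proof (rule eq_matI)
      fix i j assume "i < dim_row (complex_of_real ((cmod l)^2) \<cdot>\<^sub>m outer z z)"
        "j < dim_col (complex_of_real ((cmod l)^2) \<cdot>\<^sub>m outer z z)"
      then have i: "i < n" and j: "j < n" unfolding z_def by auto
      have "outer y y $$ (i,j) = (cnj l * z $ i) * cnj (cnj l * z $ j)"
        using i j yz by (simp add: y_def)
      also have "\<dots> = (l * cnj l) * (z $ i * cnj (z $ j))" by (simp add: mult_ac)
      also have "\<dots> = complex_of_real ((cmod l)^2) * (z $ i * cnj (z $ j))"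
        using complex_norm_square[of l] by simp
      finally show "outer y y $$ (i,j) = (complex_of_real ((cmod l)^2) \<cdot>\<^sub>m outer z z) $$ (i,j)"
        using i j by (simp add: z_def)
    qed (auto simp: y_def z_def)
    ultimately show ?thesis unfolding good_def
      by (intro disjI2 exI[of _ "(cmod l)^2"] exI[of _ "outer z z"]) auto
  qed
qed

lemma R1_carrier:
  assumes "A \<in> R1_DNN n" shows "A \<in> carrier_mat n n"
proof -
  obtain Ms where Ms: "\<forall>(c, M) \<in> set Ms. c \<ge> 0 \<and> M \<in> DNN n \<and> vec_space.rank n M = 1"
    and A: "A = foldr (+) (map (\<lambda>(c, M). complex_of_real c \<cdot>\<^sub>m M) Ms) (0\<^sub>m n n)"
    using assms unfolding R1_DNN_def by blast
  have "\<forall>x\<in>set Ms. (\<lambda>(c, M). complex_of_real c \<cdot>\<^sub>m M) x \<in> carrier_mat n n"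
    using Ms by (auto simp: DNN_def psd_mat_def)
  then show ?thesis unfolding A by (rule foldr_carrier)
qed

lemma R1_add_good:
  assumes A: "A \<in> R1_DNN n" and T: "good n T"
  shows "T + A \<in> R1_DNN n"
proof -
  obtain Ms where Ms: "\<forall>(c, M) \<in> set Ms. c \<ge> 0 \<and> M \<in> DNN n \<and> vec_space.rank n M = 1"
    and A': "A = foldr (+) (map (\<lambda>(c, M). complex_of_real c \<cdot>\<^sub>m M) Ms) (0\<^sub>m n n)"
    using A unfolding R1_DNN_def by blast
  show ?thesis
  proof (cases "T = 0\<^sub>m n n")
    case True
    then show ?thesis using A R1_carrier[OF A] by simp
  next
    case False
    then obtain c Z where cZ: "c \<ge> 0" "Z \<in> DNN n" "vec_space.rank n Z = 1" "T = complex_of_real c \<cdot>\<^sub>m Z"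
      using T unfolding good_def by blast
    show ?thesis unfolding R1_DNN_def
      by (rule CollectI, rule exI[of _ "(c, Z) # Ms"]) (use Ms A' cZ in auto)
  qed
qed

lemma R1_foldr:
  assumes "\<forall>x\<in>set xs. good n (f x)"
  shows "foldr (+) (map f xs) (0\<^sub>m n n) \<in> R1_DNN n"
  using assms
proof (induction xs)
  case Nil
  show ?case unfolding R1_DNN_def by (rule CollectI, rule exI[of _ "[]"]) auto
next
  case (Cons a xs)
  then show ?case using R1_add_good by auto
qed

lemma tv_carrier: "v \<in> carrier_vec d \<Longrightarrow> w \<in> carrier_vec d \<Longrightarrow> tv v w \<in> carrier_vec (d*d)"
  by (rule carrier_vecI) (rule tv_dim)

lemma ptrans_foldr:
  assumes "\<forall>(v, w) \<in> set xs. v \<in> carrier_vec d \<and> w \<in> carrier_vec d"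
  shows "ptrans d (foldr (+) (map (\<lambda>(v, w). kron_mat (outer v v) (outer w w)) xs) (0\<^sub>m (d*d) (d*d)))
    = foldr (+) (map (\<lambda>(v, w). outer (tv v w) (tv v w)) xs) (0\<^sub>m (d*d) (d*d))"
  using assms
proof (induction xs)
  case Nil
  then show ?case by (simp add: ptrans_zero)
next
  case (Cons a xs)
  obtain v w where a: "a = (v, w)" by force
  have vw: "v \<in> carrier_vec d" "w \<in> carrier_vec d" using Cons.prems a by auto
  have c: "\<forall>x\<in>set xs. (\<lambda>(v, w). kron_mat (outer v v) (outer w w)) x \<in> carrier_mat (d*d) (d*d)"
    using Cons.prems kron_carrier by auto
  show ?case using Cons vw
    by (simp add: a ptrans_add[OF kron_carrier[OF vw] foldr_carrier[OF c]] ptrans_kron)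
qed

lemma sandwich_foldr:
  assumes K: "K \<in> carrier_mat n N" and g: "\<forall>x\<in>set xs. g x \<in> carrier_mat N N"
  shows "K * foldr (+) (map g xs) (0\<^sub>m N N) * mat_adjoint K
    = foldr (+) (map (\<lambda>x. K * g x * mat_adjoint K) xs) (0\<^sub>m n n)"
  using g
proof (induction xs)
  case Nil
  have adj: "mat_adjoint K \<in> carrier_mat N n" by (rule adj_carrier[OF K])
  show ?case
    by (simp only: list.map(1) foldr.simps(1) id_apply right_mult_zero_mat[OF K] left_mult_zero_mat[OF adj])
next
  case (Cons a xs)
  have ga: "g a \<in> carrier_mat N N" using Cons.prems by simp
  have gs: "\<forall>x\<in>set xs. g x \<in> carrier_mat N N" using Cons.prems by simp
  have R: "foldr (+) (map g xs) (0\<^sub>m N N) \<in> carrier_mat N N" by (rule foldr_carrier[OF gs])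
  have adj: "mat_adjoint K \<in> carrier_mat N n" by (rule adj_carrier[OF K])
  have IH: "K * foldr (+) (map g xs) (0\<^sub>m N N) * mat_adjoint K
    = foldr (+) (map (\<lambda>x. K * g x * mat_adjoint K) xs) (0\<^sub>m n n)" by (rule Cons.IH[OF gs])
  have e1: "K * (g a + foldr (+) (map g xs) (0\<^sub>m N N)) = K * g a + K * foldr (+) (map g xs) (0\<^sub>m N N)"
    by (rule mult_add_distrib_mat[OF K ga R])
  have e2: "(K * g a + K * foldr (+) (map g xs) (0\<^sub>m N N)) * mat_adjoint K
      = K * g a * mat_adjoint K + K * foldr (+) (map g xs) (0\<^sub>m N N) * mat_adjoint K"
    by (rule add_mult_distrib_mat[OF mult_carrier_mat[OF K ga] mult_carrier_mat[OF K R] adj])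
  show ?case
    by (simp only: list.map(2) foldr.simps(2) o_apply e1 e2 IH)
qed

theorem mainTheorem12:
  fixes n d :: nat and u :: "nat \<Rightarrow> complex vec" and \<rho> :: "complex mat"
  assumes "n \<le> d"
    and "\<And>i. i < n \<Longrightarrow> u i \<in> carrier_vec d"
    and "\<And>i j. i < n \<Longrightarrow> j < n \<Longrightarrow> u i \<bullet>c u j = (if i = j then 1 else 0)"
    and "psd_mat (d*d) \<rho>"
    and "separable d \<rho>"
    and "range_in_sym d \<rho>"
  shows "K_mat n d u * ptrans d \<rho> * mat_adjoint (K_mat n d u) \<in> R1_DNN n"
proof -
  obtain vws where vws: "\<forall>(v, w) \<in> set vws. v \<in> carrier_vec d \<and> w \<in> carrier_vec d"
    and rho: "\<rho> = foldr (+) (map (\<lambda>(v, w). kron_mat (outer v v) (outer w w)) vws) (0\<^sub>m (d*d) (d*d))"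
    using assms(5) unfolding separable_def by blast
  let ?K = "K_mat n d u"
  let ?O = "\<lambda>(v, w). outer (tv v w) (tv v w)"
  have Oc: "\<forall>x\<in>set vws. ?O x \<in> carrier_mat (d*d) (d*d)"
    using vws tv_carrier outer_carrier by auto
  have P: "ptrans d \<rho> = foldr (+) (map ?O vws) (0\<^sub>m (d*d) (d*d))"
    unfolding rho by (rule ptrans_foldr[OF vws])
  have "?K * ptrans d \<rho> * mat_adjoint ?K = ?K * foldr (+) (map ?O vws) (0\<^sub>m (d*d) (d*d)) * mat_adjoint ?K"
    by (simp only: P)
  also have "\<dots> = foldr (+) (map (\<lambda>x. ?K * ?O x * mat_adjoint ?K) vws) (0\<^sub>m n n)"
    by (rule sandwich_foldr[OF K_carrier Oc])
  also have "\<dots> \<in> R1_DNN n"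
  proof (rule R1_foldr, rule ballI)
    fix x assume x: "x \<in> set vws"
    obtain v w where xe: "x = (v, w)" by force
    have vw: "v \<in> carrier_vec d" "w \<in> carrier_vec d" using vws x xe by auto
    have xm: "(v, w) \<in> set vws" using x xe by simp
    have sym: "v $ p * w $ q = v $ q * w $ p" if "p < d" "q < d" for p q
      by (rule sym_terms[OF vws rho assms(6) xm that])
    have Ox: "?O x = outer (tv v w) (tv v w)" using xe by simp
    have "?K * ?O x * mat_adjoint ?K = outer (?K *\<^sub>v tv v w) (?K *\<^sub>v tv v w)"
      unfolding Ox by (rule outer_sandwich[OF K_carrier tv_carrier[OF vw]])
    also have "\<dots> = outer (vec n (\<lambda>i. alpha d u i v * cnj (alpha d u i w))) (vec n (\<lambda>i. alpha d u i v * cnj (alpha d u i w)))"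
      by (simp only: K_tv[OF assms(2) vw])
    finally have eq: "?K * ?O x * mat_adjoint ?K = outer (vec n (\<lambda>i. alpha d u i v * cnj (alpha d u i w))) (vec n (\<lambda>i. alpha d u i v * cnj (alpha d u i w)))" .
    show "good n (?K * ?O x * mat_adjoint ?K)"
      unfolding eq by (rule good_outer[OF vw sym])
  qed
  finally show ?thesis .
qed

end
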